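(* Let $\Omega\subset\mathbb{C}^d$ be a $\mathbb{C}$-proper convex open set, $o\in\Omega$, and let $p_n,q_n\in\Omega$ be sequences with $p_n\to\xi^+\in\partial\Omega$, $q_n\to\xi^-\in\partial\Omega\cup\{\infty\}$ and $\liminf_{n,m\to\infty}(p_n|q_m)_o<\infty$. If $\partial\Omega$ is $C^2$ near $\xi^+$, then $\xi^+\neq\xi^-$.
   Context: $\mathbb{C}$-proper: contains no complex affine line. $d_\Omega$ is the Kobayashi distance and $(x|y)_o=\tfrac12\big(d_\Omega(o,x)+d_\Omega(o,y)-d_\Omega(x,y)\big)$ is the Gromov product. *)

theory Defs
  imports "HOL-Analysis.Analysis" "HOL-Library.Liminf_Limsup"
begin

definition C_proper :: "(complex ^ 'd) set \<Rightarrow> bool" where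
  "C_proper \<Omega> \<longleftrightarrow> \<not> (\<exists>a v. v \<noteq> 0 \<and> (\<forall>t::complex. a + t *s v \<in> \<Omega>))"

text \<open>Holomorphic discs: holomorphic maps from the unit disc into the domain
  (holomorphy of a C^d-valued map = holomorphy of every coordinate).\<close>
definition analytic_disc :: "(complex ^ 'd) set \<Rightarrow> (complex \<Rightarrow> complex ^ 'd) \<Rightarrow> bool" where
  "analytic_disc \<Omega> f \<longleftrightarrow>
     (\<forall>i. (\<lambda>z. f z $ i) holomorphic_on ball 0 1) \<and> f ` ball 0 1 \<subseteq> \<Omega>"

definition poincare0 :: "complex \<Rightarrow> real" where
  "poincare0 z = artanh (norm z)"

fun kob_chain :: "(complex ^ 'd) set \<Rightarrow> complex ^ 'd \<Rightarrow> complex ^ 'd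
     \<Rightarrow> ((complex \<Rightarrow> complex ^ 'd) \<times> complex) list \<Rightarrow> bool" where
  "kob_chain \<Omega> x y [] \<longleftrightarrow> False"
| "kob_chain \<Omega> x y [(f, z)] \<longleftrightarrow>
     analytic_disc \<Omega> f \<and> z \<in> ball 0 1 \<and> f 0 = x \<and> f z = y"
| "kob_chain \<Omega> x y ((f, z) # c # cs) \<longleftrightarrow>
     analytic_disc \<Omega> f \<and> z \<in> ball 0 1 \<and> f 0 = x \<and> kob_chain \<Omega> (f z) y (c # cs)"

definition kobayashi_dist :: "(complex ^ 'd) set \<Rightarrow> complex ^ 'd \<Rightarrow> complex ^ 'd \<Rightarrow> real" where
  "kobayashi_dist \<Omega> x y =
     Inf {sum_list (map (\<lambda>(f, z). poincare0 z) L) | L. kob_chain \<Omega> x y L}"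

definition gromov_product :: "(complex ^ 'd) set \<Rightarrow> complex ^ 'd \<Rightarrow> complex ^ 'd \<Rightarrow> complex ^ 'd \<Rightarrow> real" where
  "gromov_product \<Omega> o' x y =
     (kobayashi_dist \<Omega> o' x + kobayashi_dist \<Omega> o' y - kobayashi_dist \<Omega> x y) / 2"

definition C2_on :: "(complex ^ 'd) set \<Rightarrow> (complex ^ 'd \<Rightarrow> real) \<Rightarrow> bool" where
  "C2_on U r \<longleftrightarrow> (\<exists>r' r''.
     (\<forall>x\<in>U. (r has_derivative blinfun_apply (r' x)) (at x)) \<and>
     (\<forall>x\<in>U. (r' has_derivative blinfun_apply (r'' x)) (at x)) \<and>
     continuous_on U r'')"

definition C2_boundary_near :: "(complex ^ 'd) set \<Rightarrow> complex ^ 'd \<Rightarrow> bool" where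
  "C2_boundary_near \<Omega> \<xi> \<longleftrightarrow> (\<exists>U r. open U \<and> \<xi> \<in> U \<and> C2_on U r \<and>
     (\<forall>x\<in>U. \<not> (r has_derivative (\<lambda>_. 0)) (at x)) \<and>
     \<Omega> \<inter> U = {x \<in> U. r x < 0})"

end

theory Submission
  imports Defs "HOL-Complex_Analysis.Complex_Analysis"
begin


lemma harnack_aux:
  fixes a h w :: complex
  assumes "w * (1 - h) = a + cnj a * h" "norm h \<le> t" "t < 1" "Re w > 0" "Re a > 0"
  shows "Re a * (1 - t) \<le> Re w * (1 + t)"
proof -
  have e: "Re w * (norm (1 - h))^2 = Re a * (1 - (norm h)^2)"
  proof -
    have "w * (1 - h) * cnj (1 - h) = (a + cnj a * h) * cnj (1 - h)" using assms(1) by simp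
    moreover have "(1 - h) * cnj (1 - h) = of_real ((norm (1 - h))^2)"
      by (metis complex_norm_square of_real_power)
    ultimately have "w * of_real ((norm (1 - h))^2) = (a + cnj a * h) * cnj (1 - h)"
      by (metis mult.assoc)
    hence "Re (w * of_real ((norm (1 - h))^2)) = Re ((a + cnj a * h) * cnj (1 - h))" by simp
    thus ?thesis by (simp add: algebra_simps cmod_def power2_eq_square)
  qed
  have n1: "norm (1 - h) \<le> 1 + norm h" using norm_triangle_ineq4[of 1 h] by simp
  have hn: "norm h < 1" using assms by simp
  have "(norm (1 - h))^2 \<le> (1 + norm h)^2" using n1 by (simp add: power_mono)
  hence "Re w * (norm (1 - h))^2 \<le> Re w * (1 + norm h)^2" using assms(4) by simp
  hence "Re a * (1 - norm h) * (1 + norm h) \<le> Re w * (1 + norm h) * (1 + norm h)"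
    using e by (simp add: algebra_simps power2_eq_square)
  hence A: "Re a * (1 - norm h) \<le> Re w * (1 + norm h)"
    by (smt (verit) mult_right_le_imp_le norm_ge_zero)
  have "Re a * (1 - t) \<le> Re a * (1 - norm h)" using assms by simp
  also have "\<dots> \<le> Re w * (1 + norm h)" by (rule A)
  also have "\<dots> \<le> Re w * (1 + t)" using assms by simp
  finally show ?thesis .
qed

lemma harnack:
  assumes hol: "g holomorphic_on ball 0 1" and pos: "\<And>z. norm z < 1 \<Longrightarrow> Re (g z) > 0"
    and z: "norm z < 1"
  shows "Re (g 0) * (1 - norm z) \<le> Re (g z) * (1 + norm z)"
proof -
  define a where "a = g 0"
  have Ra: "Re a > 0" using pos[of 0] by (simp add: a_def)
  define h where "h = (\<lambda>\<zeta>. (g \<zeta> - a) / (g \<zeta> + cnj a))"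
  have den: "g \<zeta> + cnj a \<noteq> 0" if "norm \<zeta> < 1" for \<zeta>
  proof -
    have "Re (g \<zeta> + cnj a) > 0" using pos[OF that] Ra by simp
    thus ?thesis by (metis less_irrefl zero_complex.sel(1))
  qed
  have hh: "h holomorphic_on ball 0 1"
    unfolding h_def using den by (auto intro!: holomorphic_intros hol)
  have h0: "h 0 = 0" by (simp add: h_def a_def)
  have hlt: "norm (h \<zeta>) < 1" if "norm \<zeta> < 1" for \<zeta>
  proof -
    have p: "Re (g \<zeta>) > 0" using pos[OF that] .
    have e1: "(norm (g \<zeta> - a))^2 = (Re (g \<zeta>) - Re a)^2 + (Im (g \<zeta>) - Im a)^2"
      by (simp add: cmod_power2)
    have e2: "(norm (g \<zeta> + cnj a))^2 = (Re (g \<zeta>) + Re a)^2 + (Im (g \<zeta>) - Im a)^2"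
      by (simp add: cmod_power2)
    have "0 < Re (g \<zeta>) * Re a" using p Ra by simp
    hence "(norm (g \<zeta> - a))^2 < (norm (g \<zeta> + cnj a))^2"
      unfolding e1 e2 by (simp add: power2_eq_square algebra_simps)
    hence "norm (g \<zeta> - a) < norm (g \<zeta> + cnj a)"
      by (smt (verit) norm_ge_zero power_mono)
    thus ?thesis using den[OF that] by (simp add: h_def norm_divide divide_less_eq)
  qed
  have hz: "norm (h z) \<le> norm z" using Schwarz_Lemma(1)[OF hh h0 hlt z] .
  have eq: "g z * (1 - h z) = a + cnj a * h z"
  proof -
    have d: "g z + cnj a \<noteq> 0" using den[OF z] .
    have "g z * (1 - h z) = g z * ((g z + cnj a) - (g z - a)) / (g z + cnj a)"
      using d by (simp add: h_def field_simps)
    also have "\<dots> = (a + cnj a * h z)"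
      using d by (simp add: h_def field_simps)
    finally show ?thesis .
  qed
  show ?thesis using harnack_aux[OF eq hz _ pos[OF z] Ra] z by (simp add: a_def)
qed



definition lin_disc :: "complex^'d \<Rightarrow> complex^'d \<Rightarrow> complex \<Rightarrow> complex^'d" where
  "lin_disc c v \<zeta> = c + (\<chi> i. \<zeta> * v$i)"

lemma norm_cmul_vec: "norm ((\<chi> i. k * v$i) :: complex^'d) = cmod k * norm v"
  unfolding norm_vec_def by (simp add: norm_mult L2_set_right_distrib)

lemma lin_disc_sub: "lin_disc c v \<zeta> - c = (\<chi> i. \<zeta> * v$i)"
  by (simp add: lin_disc_def)

lemma lin_disc_hol: "(g :: complex \<Rightarrow> complex) holomorphic_on S \<Longrightarrow> (\<lambda>\<zeta>. lin_disc c v (g \<zeta>) $ i) holomorphic_on S"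
  unfolding lin_disc_def by (auto intro!: holomorphic_intros)

lemma poincare0_nonneg: "norm z < 1 \<Longrightarrow> 0 \<le> poincare0 z"
  unfolding poincare0_def artanh_def by (simp add: field_simps)

lemma chain_nonneg: "kob_chain \<Omega> x y L \<Longrightarrow> 0 \<le> sum_list (map (\<lambda>(f, z). poincare0 z) L)"
proof (induction \<Omega> x y L rule: kob_chain.induct)
  case (2 \<Omega> x y f z) thus ?case by (simp add: poincare0_nonneg)
next
  case (3 \<Omega> x y f z c cs) thus ?case using poincare0_nonneg[of z] by simp
qed simp

lemma kd_le: "kob_chain \<Omega> x y L \<Longrightarrow> kobayashi_dist \<Omega> x y \<le> sum_list (map (\<lambda>(f, z). poincare0 z) L)"
  unfolding kobayashi_dist_def
  by (rule cInf_lower) (auto intro: chain_nonneg simp: bdd_below_def)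

lemma chain_snoc: "kob_chain \<Omega> x y L \<Longrightarrow> analytic_disc \<Omega> f \<Longrightarrow> norm z < 1 \<Longrightarrow> f 0 = y
   \<Longrightarrow> kob_chain \<Omega> x (f z) (L @ [(f, z)])"
proof (induction \<Omega> x y L rule: kob_chain.induct)
  case (2 \<Omega> x y g w) thus ?case by simp
next
  case (3 \<Omega> x y g w c cs) thus ?case by simp
qed simp

lemma disc_from_center:
  assumes "ball c s \<subseteq> \<Omega>" "s > 0" "y \<in> ball c s"
  shows "\<exists>f z. analytic_disc \<Omega> f \<and> norm z < 1 \<and> f 0 = c \<and> f z = y \<and> poincare0 z = artanh (dist c y / s)"
proof (cases "y = c")
  case True
  show ?thesis
    by (rule exI[of _ "\<lambda>_. c"], rule exI[of _ 0])
       (use True assms in \<open>auto simp: analytic_disc_def poincare0_def\<close>)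
next
  case False
  define t where "t = dist c y / s"
  have t: "0 < t" "t < 1" using False assms by (auto simp: t_def dist_commute)
  define v where "v = (1/t) *\<^sub>R (y - c)"
  have nv: "norm v = s" using t assms(2) False by (simp add: v_def t_def dist_norm norm_minus_commute)
  have an: "analytic_disc \<Omega> (lin_disc c v)"
    unfolding analytic_disc_def
  proof
    show "\<forall>i. (\<lambda>z. lin_disc c v z $ i) holomorphic_on ball 0 1"
      using lin_disc_hol[of "\<lambda>z. z"] by (auto intro: holomorphic_intros)
    show "lin_disc c v ` ball 0 1 \<subseteq> \<Omega>"
    proof
      fix w assume "w \<in> lin_disc c v ` ball 0 1"
      then obtain \<zeta> where z: "norm \<zeta> < 1" "w = lin_disc c v \<zeta>" by auto
      have "dist c w = norm (w - c)" by (simp add: dist_norm norm_minus_commute)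
      also have "\<dots> = norm \<zeta> * s" using z by (simp add: lin_disc_sub norm_cmul_vec nv)
      also have "\<dots> < s" using z assms(2) by simp
      finally show "w \<in> \<Omega>" using assms(1) by auto
    qed
  qed
  have "lin_disc c v (of_real t) = y"
  proof -
    have "complex_of_real t * ((1/t) *\<^sub>R w) = w" for w :: complex
      using t by (simp add: scaleR_conv_of_real)
    thus ?thesis by (simp add: lin_disc_def v_def vec_eq_iff)
  qed
  moreover have "lin_disc c v 0 = c" by (simp add: lin_disc_def vec_eq_iff)
  ultimately show ?thesis using an t unfolding t_def[symmetric]
    by (intro exI[of _ "lin_disc c v"] exI[of _ "of_real t"]) (auto simp: poincare0_def)
qed



lemma disc_image_ball:
  assumes "ball c s \<subseteq> \<Omega>" "norm v = s" "norm \<zeta> < 1" "s > 0"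
  shows "lin_disc c v \<zeta> \<in> \<Omega>"
proof -
  have "dist c (lin_disc c v \<zeta>) = norm (lin_disc c v \<zeta> - c)" by (simp add: dist_norm norm_minus_commute)
  also have "\<dots> = norm \<zeta> * s" using assms by (simp add: lin_disc_sub norm_cmul_vec)
  also have "\<dots> < s" using assms by simp
  finally show ?thesis using assms(1) by auto
qed

lemma disc_to_center:
  assumes "ball c s \<subseteq> \<Omega>" "s > 0" "p \<in> ball c s"
  shows "\<exists>f z. analytic_disc \<Omega> f \<and> norm z < 1 \<and> f 0 = p \<and> f z = c \<and> poincare0 z = artanh (dist c p / s)"
proof (cases "p = c")
  case True
  show ?thesis
    by (rule exI[of _ "\<lambda>_. c"], rule exI[of _ 0])
       (use True assms in \<open>auto simp: analytic_disc_def poincare0_def\<close>)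
next
  case False
  define t where "t = dist c p / s"
  have t: "0 < t" "t < 1" using False assms by (auto simp: t_def)
  define v where "v = (1/t) *\<^sub>R (c - p)"
  have nv: "norm v = s" using t assms(2) False by (simp add: v_def t_def dist_norm)
  define \<phi> where "\<phi> = Moebius_function 0 (complex_of_real t)"
  have ph: "\<phi> holomorphic_on ball 0 1" unfolding \<phi>_def
    by (rule Moebius_function_holomorphic) (use t in simp)
  have phn: "norm (\<phi> \<zeta>) < 1" if "norm \<zeta> < 1" for \<zeta> unfolding \<phi>_def
    by (rule Moebius_function_norm_lt_1) (use t that in simp_all)
  define f where "f = (\<lambda>\<zeta>. lin_disc c v (\<phi> \<zeta>))"
  have an: "analytic_disc \<Omega> f"
    unfolding analytic_disc_def f_def
    using lin_disc_hol[OF ph] disc_image_ball[OF assms(1) nv phn assms(2)] by auto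
  have "f 0 = p"
  proof -
    have "complex_of_real (-t) * ((1/t) *\<^sub>R w) = - w" for w :: complex
      using t by (simp add: scaleR_conv_of_real)
    moreover have "\<phi> 0 = complex_of_real (-t)" by (simp add: \<phi>_def Moebius_function_of_zero)
    ultimately show ?thesis by (simp add: f_def lin_disc_def v_def vec_eq_iff)
  qed
  moreover have "f (of_real t) = c"
    by (simp add: f_def \<phi>_def Moebius_function_eq_zero lin_disc_def vec_eq_iff)
  ultimately show ?thesis using an t unfolding t_def[symmetric]
    by (intro exI[of _ f] exI[of _ "of_real t"]) (auto simp: poincare0_def)
qed

lemma three_leg:
  assumes "ball c1 s \<subseteq> \<Omega>" "ball c2 s \<subseteq> \<Omega>" "s > 0"
    "x \<in> ball c1 s" "c2 \<in> ball c1 s" "y \<in> ball c2 s"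
  shows "kobayashi_dist \<Omega> x y \<le> artanh (dist c1 x / s) + artanh (dist c1 c2 / s) + artanh (dist c2 y / s)"
proof -
  obtain f1 z1 where 1: "analytic_disc \<Omega> f1" "norm z1 < 1" "f1 0 = x" "f1 z1 = c1" "poincare0 z1 = artanh (dist c1 x / s)"
    using disc_to_center[OF assms(1,3,4)] by blast
  obtain f2 z2 where 2: "analytic_disc \<Omega> f2" "norm z2 < 1" "f2 0 = c1" "f2 z2 = c2" "poincare0 z2 = artanh (dist c1 c2 / s)"
    using disc_from_center[OF assms(1,3,5)] by blast
  obtain f3 z3 where 3: "analytic_disc \<Omega> f3" "norm z3 < 1" "f3 0 = c2" "f3 z3 = y" "poincare0 z3 = artanh (dist c2 y / s)"
    using disc_from_center[OF assms(2,3,6)] by blast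
  have "kob_chain \<Omega> x y [(f1, z1), (f2, z2), (f3, z3)]" using 1 2 3 by simp
  from kd_le[OF this] show ?thesis using 1 2 3 by simp
qed

lemma chain_exists:
  assumes "open \<Omega>" "connected \<Omega>" "a \<in> \<Omega>" "b \<in> \<Omega>"
  shows "\<exists>L. kob_chain \<Omega> a b L"
proof -
  let ?P = "\<lambda>y. \<exists>L. kob_chain \<Omega> a y L"
  have Pa: "?P a"
    by (rule exI[of _ "[(\<lambda>_. a, 0)]"]) (use assms in \<open>auto simp: analytic_disc_def\<close>)
  show ?thesis
  proof (rule connected_induction_simple[OF assms(2) assms(3) assms(4), where P = ?P, OF Pa])
    fix u assume u: "u \<in> \<Omega>"
    obtain e where e: "e > 0" "ball u (2 * e) \<subseteq> \<Omega>"
      using assms(1) u by (metis open_contains_ball_eq zero_less_mult_iff zero_less_numeral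
          field_sum_of_halves mult_2 half_gt_zero_iff)
    show "\<exists>T. openin (top_of_set \<Omega>) T \<and> u \<in> T \<and> (\<forall>x\<in>T. \<forall>y\<in>T. ?P x \<longrightarrow> ?P y)"
    proof (intro exI[of _ "ball u (e/2)"] conjI ballI impI)
      show "openin (top_of_set \<Omega>) (ball u (e/2))"
        using e by (intro open_subset) auto
      show "u \<in> ball u (e/2)" using e by simp
      fix x y assume xy: "x \<in> ball u (e/2)" "y \<in> ball u (e/2)" and Px: "?P x"
      then obtain L where L: "kob_chain \<Omega> a x L" by blast
      have bx: "ball x e \<subseteq> \<Omega>"
      proof
        fix w assume "w \<in> ball x e"
        hence "dist x w < e" by simp
        moreover have "dist u x < e/2" using xy by simp
        ultimately have "dist u w < 2 * e" using dist_triangle[of u w x] e(1) by linarith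
        thus "w \<in> \<Omega>" using e by auto
      qed
      have yb: "y \<in> ball x e" using xy dist_triangle[of x y u] e by (auto simp: dist_commute)
      obtain f z where f: "analytic_disc \<Omega> f" "norm z < 1" "f 0 = x" "f z = y"
        using disc_from_center[OF bx e(1) yb] by blast
      show "?P y" using chain_snoc[OF L f(1,2,3)] f(4) by auto
    qed
  qed
qed



lemma re_sum_cnj: "Re (\<Sum>i\<in>UNIV. cnj (n$i) * w$i) = inner n (w :: complex^'d)"
  by (simp add: inner_vec_def inner_complex_def Re_sum)

lemma disc_harnack_vec:
  assumes an: "analytic_disc \<Omega> f" and z: "norm z < 1" and sep: "\<forall>y\<in>\<Omega>. inner n y < c"
  shows "(c - inner n (f 0)) * (1 - norm z) \<le> (c - inner n (f z)) * (1 + norm z)"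
proof -
  define g where "g = (\<lambda>\<zeta>. complex_of_real c - (\<Sum>i\<in>UNIV. cnj (n$i) * f \<zeta> $ i))"
  have hol: "g holomorphic_on ball 0 1"
    using an unfolding g_def analytic_disc_def by (auto intro!: holomorphic_intros)
  have re: "Re (g \<zeta>) = c - inner n (f \<zeta>)" for \<zeta>
    unfolding g_def using re_sum_cnj[of n "f \<zeta>"] by simp
  have pos: "Re (g \<zeta>) > 0" if "norm \<zeta> < 1" for \<zeta>
  proof -
    have "f \<zeta> \<in> \<Omega>" using an that unfolding analytic_disc_def by auto
    thus ?thesis using sep re by auto
  qed
  show ?thesis using harnack[OF hol pos z] re by simp
qed

lemma ln_step:
  fixes A B r :: real
  assumes "A > 0" "B > 0" "0 \<le> r" "r < 1" "A * (1 - r) \<le> B * (1 + r)"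
  shows "ln (A / B) \<le> 2 * artanh r"
proof -
  have "A / B \<le> (1 + r) / (1 - r)" using assms by (simp add: field_simps)
  hence "ln (A / B) \<le> ln ((1 + r) / (1 - r))" using assms by simp
  thus ?thesis by (simp add: artanh_def)
qed

lemma chain_ends: "kob_chain \<Omega> x y L \<Longrightarrow> x \<in> \<Omega> \<and> y \<in> \<Omega>"
proof (induction \<Omega> x y L rule: kob_chain.induct)
  case (2 \<Omega> x y f z)
  hence "analytic_disc \<Omega> f" "z \<in> ball 0 1" "f 0 = x" "f z = y" by auto
  thus ?case unfolding analytic_disc_def by (metis centre_in_ball image_subset_iff zero_less_one)
next
  case (3 \<Omega> x y f z c cs)
  hence "analytic_disc \<Omega> f" "f 0 = x" "y \<in> \<Omega>" by auto
  thus ?case unfolding analytic_disc_def by (metis centre_in_ball image_subset_iff zero_less_one)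
qed simp

lemma chain_lower:
  assumes "kob_chain \<Omega> a x L" "\<forall>y\<in>\<Omega>. inner n y < c"
  shows "ln ((c - inner n a) / (c - inner n x)) \<le> 2 * sum_list (map (\<lambda>(f, z). poincare0 z) L)"
  using assms
proof (induction \<Omega> a x L rule: kob_chain.induct)
  case (2 \<Omega> x y f z)
  have an: "analytic_disc \<Omega> f" and z: "norm z < 1" and f0: "f 0 = x" and fz: "f z = y" using 2 by auto
  have "f 0 \<in> \<Omega>" "f z \<in> \<Omega>" using an z unfolding analytic_disc_def by auto
  hence "c - inner n x > 0" "c - inner n y > 0" using 2(2) f0 fz by auto
  thus ?case using ln_step[OF _ _ _ z, of "c - inner n x" "c - inner n y"]
      disc_harnack_vec[OF an z 2(2)] f0 fz by (simp add: poincare0_def)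
next
  case (3 \<Omega> x y f z d ds)
  have an: "analytic_disc \<Omega> f" and z: "norm z < 1" and f0: "f 0 = x" and ch: "kob_chain \<Omega> (f z) y (d # ds)"
    using 3 by auto
  have "f 0 \<in> \<Omega>" "f z \<in> \<Omega>" using an z unfolding analytic_disc_def by auto
  hence A: "c - inner n x > 0" "c - inner n (f z) > 0" using 3(3) f0 by auto
  have B: "c - inner n y > 0" using chain_ends[OF ch] 3(3) by auto
  have IH: "ln ((c - inner n (f z)) / (c - inner n y)) \<le> 2 * sum_list (map (\<lambda>(f, z). poincare0 z) (d # ds))"
    using 3 by auto
  have st: "ln ((c - inner n x) / (c - inner n (f z))) \<le> 2 * poincare0 z"
    using ln_step[OF A _ z] disc_harnack_vec[OF an z 3(3)] f0 by (simp add: poincare0_def)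
  have "ln ((c - inner n x) / (c - inner n y)) = ln ((c - inner n x) / (c - inner n (f z))) + ln ((c - inner n (f z)) / (c - inner n y))"
    using A B by (simp add: ln_div)
  thus ?case using IH st by simp
qed simp

lemma kd_lower:
  assumes "open \<Omega>" "connected \<Omega>" "a \<in> \<Omega>" "x \<in> \<Omega>" "\<forall>y\<in>\<Omega>. inner n y < c"
  shows "ln ((c - inner n a) / (c - inner n x)) / 2 \<le> kobayashi_dist \<Omega> a x"
  unfolding kobayashi_dist_def
proof (rule cInf_greatest)
  show "{sum_list (map (\<lambda>(f, z). poincare0 z) L) |L. kob_chain \<Omega> a x L} \<noteq> {}"
    using chain_exists[OF assms(1-4)] by auto
  fix v assume "v \<in> {sum_list (map (\<lambda>(f, z). poincare0 z) L) |L. kob_chain \<Omega> a x L}"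
  then obtain L where "kob_chain \<Omega> a x L" "v = sum_list (map (\<lambda>(f, z). poincare0 z) L)" by auto
  thus "ln ((c - inner n a) / (c - inner n x)) / 2 \<le> v" using chain_lower[OF _ assms(5)] by fastforce
qed



lemma frontier_not_in_open: "open \<Omega> \<Longrightarrow> b \<in> frontier \<Omega> \<Longrightarrow> b \<notin> \<Omega>"
  by (simp add: frontier_def interior_open)

lemma near_point:
  fixes \<Omega> :: "(complex^'d) set"
  assumes op: "open \<Omega>" and cv: "convex \<Omega>" and x: "x \<in> \<Omega>" and xi: "\<xi> \<in> frontier \<Omega>"
  obtains b n where "b \<in> frontier \<Omega>" "norm n = 1" "\<forall>y\<in>\<Omega>. inner n y < inner n b"
    "b - x = dist x b *\<^sub>R n" "0 < dist x b" "dist x b \<le> dist x \<xi>" "ball x (dist x b) \<subseteq> \<Omega>"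
proof -
  obtain b where b: "b \<in> frontier \<Omega>" and bmin: "\<And>y. y \<in> frontier \<Omega> \<Longrightarrow> dist x b \<le> dist x y"
    using distance_attains_inf[of "frontier \<Omega>" x] xi by auto
  define \<tau> where "\<tau> = dist x b"
  have bn: "b \<notin> \<Omega>" using frontier_not_in_open[OF op b] .
  have tpos: "0 < \<tau>" using bn x by (auto simp: \<tau>_def)
  have ball: "ball x \<tau> \<subseteq> \<Omega>"
  proof
    fix w assume w: "w \<in> ball x \<tau>"
    show "w \<in> \<Omega>"
    proof (rule ccontr)
      assume "w \<notin> \<Omega>"
      hence "ball x \<tau> - \<Omega> \<noteq> {}" using w by auto
      moreover have "x \<in> ball x \<tau> \<inter> \<Omega>" using x tpos by auto
      hence "ball x \<tau> \<inter> \<Omega> \<noteq> {}" by blast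
      ultimately have "ball x \<tau> \<inter> frontier \<Omega> \<noteq> {}"
        using connected_Int_frontier[of "ball x \<tau>" \<Omega>] by auto
      then obtain p where "p \<in> ball x \<tau>" "p \<in> frontier \<Omega>" by auto
      thus False using bmin[of p] by (auto simp: \<tau>_def)
    qed
  qed
  have bcl: "b \<in> closure \<Omega>" using b by (simp add: frontier_def)
  have "b \<notin> rel_interior \<Omega>" using bn by (simp add: rel_interior_open op)
  then obtain a where a: "a \<noteq> 0" "\<And>y. y \<in> rel_interior \<Omega> \<Longrightarrow> a \<bullet> b < a \<bullet> y"
    using supporting_hyperplane_relative_frontier[OF cv bcl] by metis
  define n where "n = - (1 / norm a) *\<^sub>R a"
  have nn: "norm n = 1" using a by (simp add: n_def)
  have sep: "\<forall>y\<in>\<Omega>. inner n y < inner n b"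
  proof
    fix y assume "y \<in> \<Omega>"
    hence "a \<bullet> b < a \<bullet> y" using a(2) by (simp add: rel_interior_open op)
    thus "inner n y < inner n b" using a by (simp add: n_def divide_simps)
  qed
  have step: "inner n x + t < inner n b" if "0 \<le> t" "t < \<tau>" for t
  proof -
    have "x + t *\<^sub>R n \<in> ball x \<tau>" using that nn by (simp add: dist_norm)
    hence "inner n (x + t *\<^sub>R n) < inner n b" using sep ball by auto
    thus ?thesis using nn by (simp add: inner_add_right power2_norm_eq_inner[symmetric])
  qed
  have ge: "inner n (b - x) \<ge> \<tau>"
  proof (rule ccontr)
    assume "\<not> ?thesis"
    moreover have "inner n (b - x) > 0" using step[of 0] tpos by (simp add: inner_diff_right)
    ultimately show False using step[of "inner n (b - x)"] by (simp add: inner_diff_right)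
  qed
  have le: "inner n (b - x) \<le> \<tau>"
    using norm_cauchy_schwarz[of n "b - x"] nn by (simp add: \<tau>_def dist_norm norm_minus_commute)
  have eq: "inner n (b - x) = \<tau>" using ge le by simp
  define v where "v = b - x"
  have vv: "inner v v = \<tau>^2" by (simp add: v_def \<tau>_def dist_norm norm_minus_commute power2_norm_eq_inner)
  have n1: "inner n n = 1" using nn by (simp add: power2_norm_eq_inner[symmetric])
  have "inner (v - \<tau> *\<^sub>R n) (v - \<tau> *\<^sub>R n) = inner v v - 2 * \<tau> * inner n v + \<tau>^2 * inner n n"
    by (simp add: inner_diff_left inner_diff_right inner_commute algebra_simps power2_eq_square)
  also have "\<dots> = 0" using eq vv n1 by (simp add: v_def power2_eq_square)
  finally have "v - \<tau> *\<^sub>R n = 0" by simp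
  hence "b - x = \<tau> *\<^sub>R n" by (simp add: v_def)
  moreover have "\<tau> \<le> dist x \<xi>" using bmin[OF xi] by (simp add: \<tau>_def)
  ultimately show ?thesis using that[OF b nn sep] tpos ball by (simp add: \<tau>_def)
qed



lemma grad_rep:
  fixes f :: "'a::euclidean_space \<Rightarrow> real"
  assumes "bounded_linear f"
  shows "f v = inner (\<Sum>i\<in>Basis. f i *\<^sub>R i) v"
proof -
  interpret bounded_linear f by fact
  have "f v = f (\<Sum>i\<in>Basis. (v \<bullet> i) *\<^sub>R i)" by (simp add: euclidean_representation)
  also have "\<dots> = (\<Sum>i\<in>Basis. (v \<bullet> i) * f i)" by (simp add: sum scale)
  also have "\<dots> = (\<Sum>i\<in>Basis. inner (f i *\<^sub>R i) v)"
    by (intro sum.cong) (auto simp: inner_commute)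
  also have "\<dots> = inner (\<Sum>i\<in>Basis. f i *\<^sub>R i) v" by (simp add: inner_sum_left)
  finally show ?thesis .
qed

lemma lip_deriv:
  fixes r' :: "'a::real_normed_vector \<Rightarrow> 'a \<Rightarrow>\<^sub>L real"
  assumes "convex S" "\<forall>x\<in>S. (r' has_derivative blinfun_apply (r'' x)) (at x)"
    "\<forall>x\<in>S. norm (r'' x) \<le> M" "x \<in> S" "y \<in> S"
  shows "norm (r' x - r' y) \<le> M * norm (x - y)"
  by (rule differentiable_bound[OF assms(1) _ _ assms(4,5)])
     (use assms(2,3) in \<open>auto intro: has_derivative_at_withinI simp: norm_blinfun.rep_eq[symmetric]\<close>)

lemma taylor_bound:
  fixes r :: "'a::real_normed_vector \<Rightarrow> real"
  assumes S: "convex S" and d: "\<forall>x\<in>S. (r has_derivative blinfun_apply (r' x)) (at x)"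
    and L: "\<forall>x\<in>S. \<forall>y\<in>S. norm (r' x - r' y) \<le> M * norm (x - y)"
    and b: "b \<in> S" and z: "z \<in> S" and M: "M \<ge> 0"
  shows "r z \<le> r b + blinfun_apply (r' b) (z - b) + M * (norm (z - b))^2"
proof -
  define h where "h = (\<lambda>w. r w - blinfun_apply (r' b) w)"
  define T where "T = closed_segment b z"
  have TS: "T \<subseteq> S" using S b z by (simp add: T_def closed_segment_subset)
  have dh: "(h has_derivative blinfun_apply (r' w - r' b)) (at w within T)" if "w \<in> T" for w
  proof -
    have "(r has_derivative blinfun_apply (r' w)) (at w)" using d TS that by auto
    hence "(h has_derivative (\<lambda>v. blinfun_apply (r' w) v - blinfun_apply (r' b) v)) (at w)"
      unfolding h_def by (auto intro!: derivative_eq_intros)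
    moreover have "blinfun_apply (r' w - r' b) = (\<lambda>v. blinfun_apply (r' w) v - blinfun_apply (r' b) v)"
      by (simp add: fun_eq_iff blinfun.diff_left)
    ultimately show ?thesis by (auto intro: has_derivative_at_withinI)
  qed
  have bd: "onorm (blinfun_apply (r' w - r' b)) \<le> M * norm (z - b)" if "w \<in> T" for w
  proof -
    have "onorm (blinfun_apply (r' w - r' b)) = norm (r' w - r' b)" by (simp add: norm_blinfun.rep_eq)
    also have "\<dots> \<le> M * norm (w - b)" using L TS that b by auto
    also have "\<dots> \<le> M * norm (z - b)"
    proof -
      have "norm (w - b) \<le> norm (z - b)" using segment_bound1[of w b z] that by (simp add: T_def)
      thus ?thesis using M by (simp add: mult_left_mono)
    qed
    finally show ?thesis .
  qed
  have "norm (h z - h b) \<le> M * norm (z - b) * norm (z - b)"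
    by (rule differentiable_bound[of T h, OF _ dh bd]) (auto simp: T_def)
  moreover have "h z - h b = r z - r b - blinfun_apply (r' b) (z - b)"
    by (simp add: h_def blinfun.diff_right)
  ultimately show ?thesis by (simp add: power2_eq_square abs_le_iff)
qed



lemma r_nonpos:
  fixes r :: "'a::metric_space \<Rightarrow> real"
  assumes "b \<in> closure \<Omega>" "b \<in> U" "open U" "isCont r b" "\<Omega> \<inter> U = {x \<in> U. r x < 0}"
  shows "r b \<le> 0"
proof (rule ccontr)
  assume "\<not> r b \<le> 0"
  hence rb: "r b > 0" by simp
  obtain d where d: "d > 0" "\<And>x. dist x b < d \<Longrightarrow> dist (r x) (r b) < r b"
    using assms(4) rb unfolding continuous_at_eps_delta by blast
  obtain d' where d': "d' > 0" "ball b d' \<subseteq> U" using assms(2,3) open_contains_ball by blast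
  obtain y where y: "y \<in> \<Omega>" "dist y b < min d d'"
    using assms(1) d(1) d'(1) unfolding closure_approachable by (metis min_less_iff_conj)
  have "y \<in> U" using y d' by (auto simp: dist_commute)
  hence "r y < 0" using y assms(5) by auto
  moreover have "dist (r y) (r b) < r b" using d y by auto
  ultimately show False by (simp add: dist_real_def)
qed

lemma interior_balls:
  fixes \<Omega> :: "(complex^'d) set"
  assumes op: "open \<Omega>" and C2: "C2_boundary_near \<Omega> \<xi>"
  obtains \<eta> \<rho> \<nu> where "\<eta> > 0" "\<rho> > 0"
    "\<forall>b\<in>frontier \<Omega> \<inter> ball \<xi> \<eta>. norm (\<nu> b) = 1"
    "\<forall>b\<in>frontier \<Omega> \<inter> ball \<xi> \<eta>. \<forall>s. 0 < s \<and> s \<le> \<rho> \<longrightarrow> ball (b + s *\<^sub>R \<nu> b) s \<subseteq> \<Omega>"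
    "\<forall>b\<in>frontier \<Omega> \<inter> ball \<xi> \<eta>. \<forall>b'\<in>frontier \<Omega> \<inter> ball \<xi> \<eta>. norm (\<nu> b - \<nu> b') \<le> 1/4"
proof -
  from C2 obtain U r where H: "open U \<and> \<xi> \<in> U \<and> C2_on U r \<and>
     (\<forall>x\<in>U. \<not> (r has_derivative (\<lambda>_. 0)) (at x)) \<and> \<Omega> \<inter> U = {x \<in> U. r x < 0}"
    unfolding C2_boundary_near_def by blast
  have U: "open U" "\<xi> \<in> U" and c2: "C2_on U r"
    and nz: "\<forall>x\<in>U. \<not> (r has_derivative (\<lambda>_. 0)) (at x)"
    and OU: "\<Omega> \<inter> U = {x \<in> U. r x < 0}" using H by simp_all
  from c2 obtain r' r'' where H2: "(\<forall>x\<in>U. (r has_derivative blinfun_apply (r' x)) (at x)) \<and>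
     (\<forall>x\<in>U. (r' has_derivative blinfun_apply (r'' x)) (at x)) \<and> continuous_on U r''"
    unfolding C2_on_def by blast
  have dr: "\<forall>x\<in>U. (r has_derivative blinfun_apply (r' x)) (at x)"
    and dr': "\<forall>x\<in>U. (r' has_derivative blinfun_apply (r'' x)) (at x)"
    and cr'': "continuous_on U r''" using H2 by simp_all
  obtain \<eta>0 where e0: "\<eta>0 > 0" "cball \<xi> \<eta>0 \<subseteq> U" using U open_contains_cball by blast
  have "compact (r'' ` cball \<xi> \<eta>0)"
    by (rule compact_continuous_image[OF continuous_on_subset[OF cr'' e0(2)]]) simp
  then obtain B where B: "\<forall>x\<in>cball \<xi> \<eta>0. norm (r'' x) \<le> B"
  proof -
    from compact_imp_bounded[OF \<open>compact (r'' ` cball \<xi> \<eta>0)\<close>]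
    obtain B where "\<forall>y\<in>r'' ` cball \<xi> \<eta>0. norm y \<le> B" unfolding bounded_iff by blast
    thus ?thesis using that by auto
  qed
  define M where "M = max B 1"
  have M: "M \<ge> 1" "\<forall>x\<in>cball \<xi> \<eta>0. norm (r'' x) \<le> M" using B by (auto simp: M_def)
  have dr0': "\<forall>x\<in>cball \<xi> \<eta>0. (r' has_derivative blinfun_apply (r'' x)) (at x)" using dr' e0(2) by blast
  have dr0: "\<forall>x\<in>cball \<xi> \<eta>0. (r has_derivative blinfun_apply (r' x)) (at x)" using dr e0(2) by blast
  have lip: "\<forall>x\<in>cball \<xi> \<eta>0. \<forall>y\<in>cball \<xi> \<eta>0. norm (r' x - r' y) \<le> M * norm (x - y)"
    using lip_deriv[OF convex_cball dr0' M(2)] by blast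
  have tay: "r z \<le> r b + blinfun_apply (r' b) (z - b) + M * (norm (z - b))^2"
    if "b \<in> cball \<xi> \<eta>0" "z \<in> cball \<xi> \<eta>0" for b z
    by (rule taylor_bound[OF convex_cball dr0 lip that]) (use M(1) in simp)
  define gr where "gr = (\<lambda>x. \<Sum>i\<in>Basis. blinfun_apply (r' x) i *\<^sub>R i)"
  have rep: "blinfun_apply (r' x) v = inner (gr x) v" for x v
    unfolding gr_def by (rule grad_rep) (rule blinfun.bounded_linear_right)
  have g0: "gr \<xi> \<noteq> 0"
  proof
    assume "gr \<xi> = 0"
    hence "blinfun_apply (r' \<xi>) = (\<lambda>_. 0)" using rep by (auto simp: fun_eq_iff)
    moreover have "(r has_derivative blinfun_apply (r' \<xi>)) (at \<xi>)" using dr U(2) by blast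
    ultimately show False using nz U(2) by simp
  qed
  have cgr: "continuous (at \<xi>) gr"
  proof -
    have "isCont r' \<xi>" using dr' U(2) has_derivative_continuous by blast
    thus ?thesis unfolding gr_def by (auto intro!: continuous_intros)
  qed
  define \<nu> where "\<nu> = (\<lambda>x. - (1 / norm (gr x)) *\<^sub>R gr x)"
  have cnu: "continuous (at \<xi>) \<nu>" unfolding \<nu>_def using cgr g0 by (auto intro!: continuous_intros)
  define G where "G = norm (gr \<xi>)"
  have G: "G > 0" using g0 by (simp add: G_def)
  obtain d1 where d1: "d1 > 0" "\<And>x. dist x \<xi> < d1 \<Longrightarrow> dist (\<nu> x) (\<nu> \<xi>) < 1/8"
  proof -
    from cnu have "\<forall>e>0. \<exists>d>0. \<forall>x. dist x \<xi> < d \<longrightarrow> dist (\<nu> x) (\<nu> \<xi>) < e"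
      by (simp add: continuous_at_eps_delta)
    from this[rule_format, of "1/8"] that show ?thesis by auto
  qed
  have cng: "continuous (at \<xi>) (\<lambda>x. norm (gr x))" using cgr by (auto intro!: continuous_intros)
  obtain d2 where d2: "d2 > 0" "\<And>x. dist x \<xi> < d2 \<Longrightarrow> dist (norm (gr x)) G < G/2"
  proof -
    from cng have "\<forall>e>0. \<exists>d>0. \<forall>x. dist x \<xi> < d \<longrightarrow> dist (norm (gr x)) G < e"
      by (simp add: continuous_at_eps_delta G_def)
    from this[rule_format, of "G/2"] that G show ?thesis by auto
  qed
  define \<eta> where "\<eta> = min (\<eta>0/2) (min d1 d2)"
  define \<rho> where "\<rho> = min (\<eta>0/4) (G / (4 * M))"
  have eta: "\<eta> > 0" using e0 d1 d2 by (simp add: \<eta>_def)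
  have rho: "\<rho> > 0" using e0 G M by (simp add: \<rho>_def)
  have grb: "norm (gr b) > G/2" if "b \<in> ball \<xi> \<eta>" for b
  proof -
    have "dist b \<xi> < d2" using that by (simp add: \<eta>_def dist_commute)
    hence "dist (norm (gr b)) G < G/2" by (rule d2(2))
    thus ?thesis unfolding dist_real_def abs_less_iff by linarith
  qed
  have nub: "norm (\<nu> b) = 1" if "b \<in> ball \<xi> \<eta>" for b
  proof -
    have "norm (gr b) > 0" using grb[OF that] G by linarith
    thus ?thesis by (simp add: \<nu>_def)
  qed
  have nuc: "dist (\<nu> b) (\<nu> \<xi>) < 1/8" if "b \<in> ball \<xi> \<eta>" for b
    using d1(2)[of b] that by (auto simp: \<eta>_def dist_commute)
  have balls: "ball (b + s *\<^sub>R \<nu> b) s \<subseteq> \<Omega>" if b: "b \<in> frontier \<Omega>" "b \<in> ball \<xi> \<eta>" and s: "0 < s" "s \<le> \<rho>" for b s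
  proof
    fix z assume z: "z \<in> ball (b + s *\<^sub>R \<nu> b) s"
    have nb: "norm (\<nu> b) = 1" using nub[OF b(2)] .
    have dbz: "dist b z < 2 * s"
    proof -
      have "dist b z \<le> dist b (b + s *\<^sub>R \<nu> b) + dist (b + s *\<^sub>R \<nu> b) z" by (rule dist_triangle)
      also have "dist b (b + s *\<^sub>R \<nu> b) = s" using nb s by (simp add: dist_norm)
      finally show ?thesis using z by simp
    qed
    have bc: "b \<in> cball \<xi> \<eta>0" using b(2) e0 by (auto simp: \<eta>_def)
    have zc: "z \<in> cball \<xi> \<eta>0"
    proof -
      have "dist \<xi> z \<le> dist \<xi> b + dist b z" by (rule dist_triangle)
      moreover have "dist \<xi> b < \<eta>0/2" using b(2) by (simp add: \<eta>_def)
      moreover have "2 * s \<le> \<eta>0/2" using s by (simp add: \<rho>_def)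
      ultimately show ?thesis using dbz by simp
    qed
    have zU: "z \<in> U" using zc e0 by auto
    have rb: "r b \<le> 0"
    proof (rule r_nonpos[OF _ _ U(1) _ OU])
      show "b \<in> closure \<Omega>" using b(1) by (simp add: frontier_def)
      show "b \<in> U" using bc e0 by auto
      thus "isCont r b" using dr has_derivative_continuous by blast
    qed
    define v where "v = z - b"
    define w where "w = inner (\<nu> b) v"
    have "norm (v - s *\<^sub>R \<nu> b) < s" using z by (simp add: v_def dist_norm norm_minus_commute algebra_simps)
    hence "(norm (v - s *\<^sub>R \<nu> b))^2 < s^2" using s by (simp add: power_strict_mono)
    moreover have "(norm (v - s *\<^sub>R \<nu> b))^2 = (norm v)^2 - 2 * s * w + s^2"
    proof -
      have nn1: "inner (\<nu> b) (\<nu> b) = 1" using nb by (simp add: dot_square_norm)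
      have "(norm (v - s *\<^sub>R \<nu> b))^2 = inner v v - 2 * s * w + s^2 * inner (\<nu> b) (\<nu> b)"
        unfolding power2_norm_eq_inner w_def
        by (simp add: inner_diff_left inner_diff_right inner_commute algebra_simps power2_eq_square)
      thus ?thesis using nn1 by (simp add: power2_norm_eq_inner)
    qed
    ultimately have vw: "(norm v)^2 < 2 * s * w" by simp
    hence "0 < 2 * s * w" by (meson le_less_trans zero_le_power2)
    hence wpos: "w > 0" using s by (simp add: zero_less_mult_iff)
    have ng: "norm (gr b) > 0" using grb[OF b(2)] G by linarith
    obtain c where c: "c = norm (gr b)" by simp
    have eqg: "gr b = - c *\<^sub>R \<nu> b" using ng c by (simp add: \<nu>_def)
    have "inner (gr b) v = - c * w" unfolding eqg w_def by simp
    hence lin: "blinfun_apply (r' b) v = - norm (gr b) * w" using c by (simp add: rep)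
    have "r z \<le> r b + blinfun_apply (r' b) v + M * (norm v)^2" using tay[OF bc zc] by (simp add: v_def)
    also have "\<dots> \<le> - norm (gr b) * w + M * (norm v)^2" using rb lin by simp
    also have "\<dots> < - norm (gr b) * w + M * (2 * s * w)" using vw M(1) by simp
    also have "\<dots> \<le> 0"
    proof -
      have "M * (2 * s) \<le> G / 2"
      proof -
        have "s \<le> G / (4 * M)" using s by (simp add: \<rho>_def)
        thus ?thesis using M(1) by (simp add: field_simps)
      qed
      hence "M * (2 * s) \<le> norm (gr b)" using grb[OF b(2)] by simp
      hence "M * (2 * s) * w \<le> norm (gr b) * w" using wpos by (simp add: mult_right_mono)
      thus ?thesis by (simp add: algebra_simps)
    qed
    finally have "r z < 0" .
    thus "z \<in> \<Omega>" using zU OU by auto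
  qed
  show ?thesis
  proof (rule that[OF eta rho])
    show "\<forall>b\<in>frontier \<Omega> \<inter> ball \<xi> \<eta>. norm (\<nu> b) = 1" using nub by auto
    show "\<forall>b\<in>frontier \<Omega> \<inter> ball \<xi> \<eta>. \<forall>s. 0 < s \<and> s \<le> \<rho> \<longrightarrow> ball (b + s *\<^sub>R \<nu> b) s \<subseteq> \<Omega>"
      using balls by auto
    show "\<forall>b\<in>frontier \<Omega> \<inter> ball \<xi> \<eta>. \<forall>b'\<in>frontier \<Omega> \<inter> ball \<xi> \<eta>. norm (\<nu> b - \<nu> b') \<le> 1/4"
    proof (intro ballI)
      fix b b' assume "b \<in> frontier \<Omega> \<inter> ball \<xi> \<eta>" "b' \<in> frontier \<Omega> \<inter> ball \<xi> \<eta>"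
      hence "dist (\<nu> b) (\<nu> \<xi>) < 1/8" "dist (\<nu> b') (\<nu> \<xi>) < 1/8" using nuc by auto
      hence "dist (\<nu> b) (\<nu> b') < 1/4" using dist_triangle[of "\<nu> b" "\<nu> b'" "\<nu> \<xi>"] by (simp add: dist_commute)
      thus "norm (\<nu> b - \<nu> b') \<le> 1/4" by (simp add: dist_norm)
    qed
  qed
qed



lemma artanh_mono_real:
  fixes u v :: real
  assumes "0 \<le> u" "u \<le> v" "v < 1"
  shows "artanh u \<le> artanh v"
proof -
  have "(1 + u) / (1 - u) \<le> (1 + v) / (1 - v)" using assms by (simp add: field_simps)
  moreover have "(1 + u) / (1 - u) > 0" using assms by simp
  ultimately show ?thesis by (simp add: artanh_def)
qed

lemma artanh_half: "artanh (1/2 :: real) = ln 3 / 2"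
  by (simp add: artanh_def)

lemma artanh_off:
  fixes s t :: real
  assumes "0 < t" "t \<le> s"
  shows "artanh ((s - t) / s) \<le> ln (2 * s / t) / 2"
proof -
  have s: "s > 0" using assms by simp
  have "(1 + (s - t) / s) / (1 - (s - t) / s) = (2 * s - t) / t" using s assms by (simp add: field_simps)
  hence "artanh ((s - t) / s) = ln ((2 * s - t) / t) / 2" by (simp add: artanh_def)
  also have "\<dots> \<le> ln (2 * s / t) / 2" using assms by (simp add: divide_right_mono)
  finally show ?thesis .
qed

lemma normal_eq:
  fixes n \<nu> b :: "'a::real_inner"
  assumes n: "norm n = 1" and nu: "norm \<nu> = 1" and sep: "\<forall>y\<in>\<Omega>. inner n y < inner n b"
    and ball: "ball (b + s *\<^sub>R \<nu>) s \<subseteq> \<Omega>" and s: "s > 0"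
  shows "\<nu> = - n"
proof -
  define a where "a = inner n \<nu>"
  have a1: "\<bar>a\<bar> \<le> 1" using Cauchy_Schwarz_ineq2[of n \<nu>] n nu by (simp add: a_def)
  have pt: "s * a + t < 0" if "0 \<le> t" "t < s" for t
  proof -
    have "b + s *\<^sub>R \<nu> + t *\<^sub>R n \<in> ball (b + s *\<^sub>R \<nu>) s" using that n by (simp add: dist_norm)
    hence "inner n (b + s *\<^sub>R \<nu> + t *\<^sub>R n) < inner n b" using sep ball by auto
    thus ?thesis using n by (simp add: inner_add_right a_def dot_square_norm)
  qed
  have "a \<le> -1"
  proof (rule ccontr)
    assume "\<not> a \<le> -1"
    hence "a > -1" by simp
    moreover have "0 \<le> s * (1 - a) / 2" using a1 s by simp
    moreover have "s * (1 - a) / 2 < s"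
    proof -
      have "0 < s * (1 + a)" using \<open>a > -1\<close> s by simp
      thus ?thesis by (simp add: field_simps algebra_simps)
    qed
    ultimately have "s * a + s * (1 - a) / 2 < 0" using pt by blast
    moreover have "s * a + s * (1 - a) / 2 = s * (1 + a) / 2" by (simp add: field_simps)
    moreover have "1 + a > 0" using \<open>a > -1\<close> by simp
    hence "s * (1 + a) / 2 > 0" using s by simp
    ultimately show False by linarith
  qed
  have "inner (\<nu> + n) (\<nu> + n) = inner \<nu> \<nu> + 2 * a + inner n n"
    by (simp add: inner_add_left inner_add_right inner_commute a_def)
  also have "\<dots> \<le> 0" using \<open>a \<le> -1\<close> n nu by (simp add: dot_square_norm)
  finally have "inner (\<nu> + n) (\<nu> + n) = 0" using inner_ge_zero[of "\<nu> + n"] by linarith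
  hence "\<nu> + n = 0" by simp
  thus ?thesis by (simp add: eq_neg_iff_add_eq_0)
qed

lemma support_dist:
  fixes n b o' :: "'a::real_inner"
  assumes n: "norm n = 1" and sep: "\<forall>y\<in>\<Omega>. inner n y < inner n b" and ball: "ball o' \<delta> \<subseteq> \<Omega>"
    and d: "\<delta> > 0"
  shows "\<delta> \<le> inner n b - inner n o'"
proof (rule ccontr)
  assume "\<not> ?thesis"
  hence lt: "inner n b - inner n o' < \<delta>" by simp
  have "o' \<in> \<Omega>" using ball d by auto
  hence pos: "0 < inner n b - inner n o'" using sep by auto
  define t where "t = inner n b - inner n o'"
  have "o' + t *\<^sub>R n \<in> ball o' \<delta>" using lt pos n by (simp add: dist_norm t_def)
  hence "inner n (o' + t *\<^sub>R n) < inner n b" using sep ball by auto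
  thus False using n by (simp add: inner_add_right t_def dot_square_norm)
qed



lemma half_aux: "(a::real) - b / 2 \<le> c \<Longrightarrow> a / 2 - b / 4 \<le> c / 2"
  by linarith

lemma core:
  fixes \<Omega> :: "(complex^'d) set"
  assumes op: "open \<Omega>" and cv: "convex \<Omega>" and ball_o: "ball o' \<delta> \<subseteq> \<Omega>" and dpos: "\<delta> > 0"
    and xi: "\<xi> \<in> frontier \<Omega>"
    and h1: "\<forall>b\<in>frontier \<Omega> \<inter> ball \<xi> \<eta>. norm (\<nu> b) = 1"
    and h2: "\<forall>b\<in>frontier \<Omega> \<inter> ball \<xi> \<eta>. \<forall>s. 0 < s \<and> s \<le> \<rho> \<longrightarrow> ball (b + s *\<^sub>R \<nu> b) s \<subseteq> \<Omega>"
    and h3: "\<forall>b\<in>frontier \<Omega> \<inter> ball \<xi> \<eta>. \<forall>b'\<in>frontier \<Omega> \<inter> ball \<xi> \<eta>. norm (\<nu> b - \<nu> b') \<le> 1/4"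
    and x: "x \<in> \<Omega>" and y: "y \<in> \<Omega>" and e: "\<epsilon> > 0" "2 * \<epsilon> \<le> \<eta>" "18 * \<epsilon> \<le> \<rho>"
    and dx: "dist x \<xi> < \<epsilon>" and dy: "dist y \<xi> < \<epsilon>"
  shows "ln (\<delta> / (36 * \<epsilon>)) / 2 - 1 \<le> gromov_product \<Omega> o' x y"
proof -
  have conn: "connected \<Omega>" using cv by (rule convex_connected)
  have o_in: "o' \<in> \<Omega>" using ball_o dpos by auto
  obtain bx nx where bx: "bx \<in> frontier \<Omega>" "norm nx = 1" "\<forall>w\<in>\<Omega>. inner nx w < inner nx bx"
    "bx - x = dist x bx *\<^sub>R nx" "0 < dist x bx" "dist x bx \<le> dist x \<xi>"
    using near_point[OF op cv x xi] by metis
  obtain by' ny where by': "by' \<in> frontier \<Omega>" "norm ny = 1" "\<forall>w\<in>\<Omega>. inner ny w < inner ny by'"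
    "by' - y = dist y by' *\<^sub>R ny" "0 < dist y by'" "dist y by' \<le> dist y \<xi>"
    using near_point[OF op cv y xi] by metis
  define tx where "tx = dist x bx"
  define ty where "ty = dist y by'"
  have bxe: "dist bx \<xi> < 2 * \<epsilon>"
    using dist_triangle[of bx \<xi> x] bx(6) dx by (simp add: dist_commute tx_def)
  have bye: "dist by' \<xi> < 2 * \<epsilon>"
    using dist_triangle[of by' \<xi> y] by'(6) dy by (simp add: dist_commute)
  have bxb: "bx \<in> frontier \<Omega> \<inter> ball \<xi> \<eta>" using bx(1) bxe e by (auto simp: dist_commute)
  have byb: "by' \<in> frontier \<Omega> \<inter> ball \<xi> \<eta>" using by'(1) bye e by (auto simp: dist_commute)
  define s where "s = 4 * dist bx by' + tx + ty"
  have tx: "0 < tx" "tx \<le> dist x \<xi>" using bx by (auto simp: tx_def)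
  have ty: "0 < ty" "ty \<le> dist y \<xi>" using by' by (auto simp: ty_def)
  have spos: "s > 0" using tx ty zero_le_dist[of bx by'] unfolding s_def by linarith
  have sle: "s < 18 * \<epsilon>"
  proof -
    have "dist bx by' \<le> dist bx \<xi> + dist by' \<xi>" using dist_triangle3[of bx by' \<xi>] by (simp add: dist_commute)
    thus ?thesis using bxe bye tx ty dx dy by (simp add: s_def)
  qed
  have srho: "s \<le> \<rho>" using sle e by simp
  have nux: "\<nu> bx = - nx"
    using normal_eq[OF bx(2) _ bx(3)] h1 h2 bxb spos srho by blast
  have nuy: "\<nu> by' = - ny"
    using normal_eq[OF by'(2) _ by'(3)] h1 h2 byb spos srho by blast
  define cx where "cx = bx + s *\<^sub>R \<nu> bx"
  define cy where "cy = by' + s *\<^sub>R \<nu> by'"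
  have bcx: "ball cx s \<subseteq> \<Omega>" using h2 bxb spos srho by (simp add: cx_def)
  have bcy: "ball cy s \<subseteq> \<Omega>" using h2 byb spos srho by (simp add: cy_def)
  have xeq: "x = bx + tx *\<^sub>R \<nu> bx" using bx(4) nux by (simp add: tx_def algebra_simps)
  have yeq: "y = by' + ty *\<^sub>R \<nu> by'" using by'(4) nuy by (simp add: ty_def algebra_simps)
  have txs: "tx \<le> s" using ty by (simp add: s_def)
  have tys: "ty \<le> s" using tx by (simp add: s_def)
  have dcx: "dist cx x = s - tx"
  proof -
    have "cx - x = (s - tx) *\<^sub>R \<nu> bx" by (simp add: cx_def xeq algebra_simps)
    thus ?thesis using h1 bxb txs by (simp add: dist_norm)
  qed
  have dcy: "dist cy y = s - ty"
  proof -
    have "cy - y = (s - ty) *\<^sub>R \<nu> by'" by (simp add: cy_def yeq algebra_simps)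
    thus ?thesis using h1 byb tys by (simp add: dist_norm)
  qed
  have dcc: "dist cx cy \<le> s / 2"
  proof -
    have "cx - cy = (bx - by') + s *\<^sub>R (\<nu> bx - \<nu> by')" by (simp add: cx_def cy_def algebra_simps)
    hence "dist cx cy \<le> norm (bx - by') + s * norm (\<nu> bx - \<nu> by')"
      using norm_triangle_ineq[of "bx - by'" "s *\<^sub>R (\<nu> bx - \<nu> by')"] spos by (simp add: dist_norm)
    also have "\<dots> \<le> s / 4 + s * (1/4)"
    proof (rule add_mono)
      show "norm (bx - by') \<le> s / 4" using tx ty by (simp add: s_def dist_norm)
      show "s * norm (\<nu> bx - \<nu> by') \<le> s * (1/4)" using h3 bxb byb spos by (simp add: mult_left_mono)
    qed
    finally show ?thesis by simp
  qed
  have up: "kobayashi_dist \<Omega> x y \<le> artanh ((s - tx) / s) + artanh (dist cx cy / s) + artanh ((s - ty) / s)"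
  proof -
    have "x \<in> ball cx s" using dcx tx by simp
    moreover have "cy \<in> ball cx s" using dcc spos by simp
    moreover have "y \<in> ball cy s" using dcy ty by simp
    ultimately have "kobayashi_dist \<Omega> x y \<le> artanh (dist cx x / s) + artanh (dist cx cy / s) + artanh (dist cy y / s)"
      by (rule three_leg[OF bcx bcy spos])
    thus ?thesis by (simp only: dcx dcy)
  qed
  have a1: "artanh ((s - tx) / s) \<le> ln (2 * s / tx) / 2" using artanh_off[OF tx(1) txs] .
  have a3: "artanh ((s - ty) / s) \<le> ln (2 * s / ty) / 2" using artanh_off[OF ty(1) tys] .
  have a2: "artanh (dist cx cy / s) \<le> ln 3 / 2"
  proof -
    have "dist cx cy / s \<le> 1/2" using dcc spos by (simp add: divide_simps)
    hence "artanh (dist cx cy / s) \<le> artanh (1/2)" using spos by (intro artanh_mono_real) auto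
    thus ?thesis by (simp add: artanh_half)
  qed
  have lowx: "ln (\<delta> / tx) / 2 \<le> kobayashi_dist \<Omega> o' x"
  proof -
    have L: "ln ((inner nx bx - inner nx o') / (inner nx bx - inner nx x)) / 2 \<le> kobayashi_dist \<Omega> o' x"
      by (rule kd_lower[OF op conn o_in x bx(3)])
    have "inner nx bx - inner nx x = tx"
      using bx(4) bx(2) by (simp add: tx_def inner_diff_right[symmetric] dot_square_norm)
    moreover have "\<delta> \<le> inner nx bx - inner nx o'" by (rule support_dist[OF bx(2,3) ball_o dpos])
    ultimately have "ln (\<delta> / tx) \<le> ln ((inner nx bx - inner nx o') / (inner nx bx - inner nx x))"
      using tx dpos by (simp add: divide_right_mono)
    thus ?thesis using L by simp
  qed
  have lowy: "ln (\<delta> / ty) / 2 \<le> kobayashi_dist \<Omega> o' y"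
  proof -
    have L: "ln ((inner ny by' - inner ny o') / (inner ny by' - inner ny y)) / 2 \<le> kobayashi_dist \<Omega> o' y"
      by (rule kd_lower[OF op conn o_in y by'(3)])
    have "inner ny by' - inner ny y = ty"
      using by'(4) by'(2) by (simp add: ty_def inner_diff_right[symmetric] dot_square_norm)
    moreover have "\<delta> \<le> inner ny by' - inner ny o'" by (rule support_dist[OF by'(2,3) ball_o dpos])
    ultimately have "ln (\<delta> / ty) \<le> ln ((inner ny by' - inner ny o') / (inner ny by' - inner ny y))"
      using ty dpos by (simp add: divide_right_mono)
    thus ?thesis using L by simp
  qed
  have lnx: "ln (\<delta> / tx) - ln (2 * s / tx) = ln (\<delta> / (2 * s))"
    using tx dpos spos by (simp add: ln_div)
  have lny: "ln (\<delta> / ty) - ln (2 * s / ty) = ln (\<delta> / (2 * s))"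
    using ty dpos spos by (simp add: ln_div)
  have "kobayashi_dist \<Omega> o' x + kobayashi_dist \<Omega> o' y - kobayashi_dist \<Omega> x y \<ge> ln (\<delta> / (2 * s)) - ln 3 / 2"
    using up a1 a2 a3 lowx lowy lnx lny by linarith
  hence "gromov_product \<Omega> o' x y \<ge> ln (\<delta> / (2 * s)) / 2 - ln 3 / 4"
    unfolding gromov_product_def by (rule half_aux)
  moreover have "ln (\<delta> / (36 * \<epsilon>)) \<le> ln (\<delta> / (2 * s))"
    using sle spos dpos e by (simp add: frac_le)
  moreover have "ln (3::real) \<le> 4"
    using ln_le_minus_one[of 3] by simp
  ultimately show ?thesis by linarith
qed



theorem proposition11p3:
  fixes \<Omega> :: "(complex ^ 'd) set"
    and o' :: "complex ^ 'd"
    and p q :: "nat \<Rightarrow> complex ^ 'd"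
    and \<xi>p :: "complex ^ 'd"
    and \<xi>m :: "(complex ^ 'd) option"
  assumes "open \<Omega>" and "convex \<Omega>" and "C_proper \<Omega>"
    and "o' \<in> \<Omega>"
    and "\<forall>n. p n \<in> \<Omega>" and "\<forall>n. q n \<in> \<Omega>"
    and "p \<longlonglongrightarrow> \<xi>p" and "\<xi>p \<in> frontier \<Omega>"
    and "case \<xi>m of
           None \<Rightarrow> filterlim (\<lambda>n. norm (q n)) at_top sequentially
         | Some \<xi> \<Rightarrow> q \<longlonglongrightarrow> \<xi> \<and> \<xi> \<in> frontier \<Omega>"
    and "Liminf (sequentially \<times>\<^sub>F sequentially)
           (\<lambda>(n, m). ereal (gromov_product \<Omega> o' (p n) (q m))) < \<infinity>"
    and "C2_boundary_near \<Omega> \<xi>p"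
  shows "Some \<xi>p \<noteq> \<xi>m"
proof
  assume eq: "Some \<xi>p = \<xi>m"
  have qlim: "q \<longlonglongrightarrow> \<xi>p" using assms(9) eq[symmetric] by simp
  obtain \<eta> \<rho> \<nu> where e: "\<eta> > 0" "\<rho> > 0"
    and h1: "\<forall>b\<in>frontier \<Omega> \<inter> ball \<xi>p \<eta>. norm (\<nu> b) = 1"
    and h2: "\<forall>b\<in>frontier \<Omega> \<inter> ball \<xi>p \<eta>. \<forall>s. 0 < s \<and> s \<le> \<rho> \<longrightarrow> ball (b + s *\<^sub>R \<nu> b) s \<subseteq> \<Omega>"
    and h3: "\<forall>b\<in>frontier \<Omega> \<inter> ball \<xi>p \<eta>. \<forall>b'\<in>frontier \<Omega> \<inter> ball \<xi>p \<eta>. norm (\<nu> b - \<nu> b') \<le> 1/4"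
    using interior_balls[OF assms(1) assms(11)] by blast
  obtain \<delta> where d: "\<delta> > 0" "ball o' \<delta> \<subseteq> \<Omega>" using assms(1,4) open_contains_ball by blast
  define L where "L = Liminf (sequentially \<times>\<^sub>F sequentially)
           (\<lambda>(n, m). ereal (gromov_product \<Omega> o' (p n) (q m)))"
  have bound: "ereal C \<le> L" for C
  proof -
    define \<epsilon> where "\<epsilon> = min (min (\<eta>/2) (\<rho>/18)) (\<delta> / 36 * exp (-2 * (C + 1)))"
    have ep: "\<epsilon> > 0" using e d by (simp add: \<epsilon>_def)
    have e2: "2 * \<epsilon> \<le> \<eta>" "18 * \<epsilon> \<le> \<rho>" by (auto simp: \<epsilon>_def)
    define X where "X = exp (-2 * (C + 1))"
    define E where "E = exp (2 * (C + 1))"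
    have XE: "X * E = 1" by (simp add: X_def E_def mult_exp_exp)
    have Ep: "E > 0" by (simp add: E_def)
    have "\<epsilon> \<le> \<delta> / 36 * X" by (simp add: \<epsilon>_def X_def)
    hence "\<epsilon> * E \<le> \<delta> / 36 * X * E" using Ep by (simp add: mult_right_mono)
    hence "36 * \<epsilon> * E \<le> \<delta>" using XE by (simp add: mult.assoc)
    hence "exp (2 * (C + 1)) \<le> \<delta> / (36 * \<epsilon>)" using ep unfolding E_def[symmetric]
      by (simp add: pos_le_divide_eq mult.commute mult.left_commute)
    hence "2 * (C + 1) \<le> ln (\<delta> / (36 * \<epsilon>))" using ep d by (simp add: ln_ge_iff)
    hence CC: "C \<le> ln (\<delta> / (36 * \<epsilon>)) / 2 - 1" by simp
    have ev1: "eventually (\<lambda>n. dist (p n) \<xi>p < \<epsilon>) sequentially" using assms(7) ep by (simp add: tendsto_iff)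
    have ev2: "eventually (\<lambda>n. dist (q n) \<xi>p < \<epsilon>) sequentially" using qlim ep by (simp add: tendsto_iff)
    have "eventually (\<lambda>x. ereal C \<le> (\<lambda>(n, m). ereal (gromov_product \<Omega> o' (p n) (q m))) x) (sequentially \<times>\<^sub>F sequentially)"
    proof (rule eventually_mono[OF eventually_prodI[OF ev1 ev2]])
      fix x :: "nat \<times> nat" assume "dist (p (fst x)) \<xi>p < \<epsilon> \<and> dist (q (snd x)) \<xi>p < \<epsilon>"
      hence "ln (\<delta> / (36 * \<epsilon>)) / 2 - 1 \<le> gromov_product \<Omega> o' (p (fst x)) (q (snd x))"
        using core[OF assms(1,2) d(2) d(1) assms(8) h1 h2 h3 _ _ ep e2] assms(5,6) by blast
      thus "ereal C \<le> (\<lambda>(n, m). ereal (gromov_product \<Omega> o' (p n) (q m))) x"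
        using CC by (cases x) simp
    qed
    thus ?thesis unfolding L_def by (rule Liminf_bounded)
  qed
  have "L < \<infinity>" using assms(10) by (simp add: L_def)
  then show False
  proof (cases L)
    case (real r) thus False using bound[of "r + 1"] by simp
  next
    case PInf thus False using \<open>L < \<infinity>\<close> by simp
  next
    case MInf thus False using bound[of 0] by simp
  qed
qed


end
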